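(* There are absolute constants $c,C>0$ such that for every integer $d\ge 2$ there exist a set $\mathcal P$ of $n$ points and a set $\mathcal H$ of $m$ hyperplanes in $\mathbb R^d$ (with $n,m\ge 1$) satisfying \[\operatorname{I}(\mathcal P,\mathcal H)\ \ge\ c\,\frac{nm}{\sqrt d}\qquad\text{and}\qquad \operatorname{rs}(\mathcal P,\mathcal H)\ \le\ C\,\frac{mn\,2^{-d}}{\sqrt d}.\]
   Context: A point $p$ and a hyperplane $h$ are incident if $p\in h$. For a finite point set $\mathcal P$ and finite hyperplane set $\mathcal H$ in $\mathbb R^d$, $\operatorname{I}(\mathcal P,\mathcal H)$ is the number of incident pairs $(p,h)\in\mathcal P\times\mathcal H$, and $\operatorname{rs}(\mathcal P,\mathcal H)=\max_{S}\,|\{p\in\mathcal P: p\in S\}|\cdot|\{h\in\mathcal H: S\subseteq h\}|$, the maximum over all affine subspaces $S\subseteq\mathbb R^d$. *)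

theory Defs
  imports Complex_Main
begin

text \<open>R^d is represented by functions nat => real vanishing outside {..<d}.\<close>

definition Rspace :: "nat \<Rightarrow> (nat \<Rightarrow> real) set" where
  "Rspace d = {x. \<forall>i\<ge>d. x i = 0}"

definition hyperplane :: "nat \<Rightarrow> (nat \<Rightarrow> real) set \<Rightarrow> bool" where
  "hyperplane d h \<longleftrightarrow> (\<exists>a b. (\<exists>i<d. a i \<noteq> 0) \<and>
      h = {x \<in> Rspace d. (\<Sum>i<d. a i * x i) = b})"

definition affine_subspace :: "nat \<Rightarrow> (nat \<Rightarrow> real) set \<Rightarrow> bool" where
  "affine_subspace d S \<longleftrightarrow> S \<noteq> {} \<and> S \<subseteq> Rspace d \<and>
      (\<forall>x\<in>S. \<forall>y\<in>S. \<forall>t::real. (\<lambda>i. (1 - t) * x i + t * y i) \<in> S)"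

definition incidences :: "(nat \<Rightarrow> real) set \<Rightarrow> (nat \<Rightarrow> real) set set \<Rightarrow> nat" where
  "incidences P H = card {(p, h). p \<in> P \<and> h \<in> H \<and> p \<in> h}"

definition rs :: "nat \<Rightarrow> (nat \<Rightarrow> real) set \<Rightarrow> (nat \<Rightarrow> real) set set \<Rightarrow> nat" where
  "rs d P H = Max {card {p \<in> P. p \<in> S} * card {h \<in> H. S \<subseteq> h} | S. affine_subspace d S}"

end

theory Submission
  imports Defs
begin

definition cube :: "nat \<Rightarrow> (nat \<Rightarrow> real) set" where
  "cube d = {x. (\<forall>i<d. x i = 0 \<or> x i = 1) \<and> (\<forall>i\<ge>d. x i = 0)}"

lemma cube_0: "cube 0 = {\<lambda>_. 0}"
  unfolding cube_def by auto

lemma cube_Suc: "cube (Suc d) = cube d \<union> (\<lambda>x. x(d:=1)) ` cube d"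
proof
  show "cube (Suc d) \<subseteq> cube d \<union> (\<lambda>x. x(d:=1)) ` cube d"
  proof
    fix x assume x: "x \<in> cube (Suc d)"
    show "x \<in> cube d \<union> (\<lambda>x. x(d:=1)) ` cube d"
    proof (cases "x d = 0")
      case True
      have "\<forall>i\<ge>d. x i = 0"
      proof (intro allI impI)
        fix i assume "d \<le> i"
        then show "x i = 0" using True x unfolding cube_def by (cases "i = d") auto
      qed
      then have "x \<in> cube d" using x unfolding cube_def by auto
      then show ?thesis by blast
    next
      case False then have x1: "x d = 1" using x unfolding cube_def by auto
      have "x(d:=0) \<in> cube d" using x unfolding cube_def
        by (auto simp: less_Suc_eq_le)
      moreover have "x = (x(d:=0))(d:=1)" using x1 by auto
      ultimately show ?thesis by blast
    qed
  qed
  show "cube d \<union> (\<lambda>x. x(d:=1)) ` cube d \<subseteq> cube (Suc d)"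
    unfolding cube_def by (auto simp: less_Suc_eq)
qed

lemma cube_last: "x \<in> cube d \<Longrightarrow> x d = 0"
  unfolding cube_def by auto

lemma upd_eq: assumes "x(d:=c) = y(d:=c')" "x d = y d" shows "x = y"
proof
  fix i
  have "(x(d:=c)) i = (y(d:=c')) i" using assms(1) by simp
  then show "x i = y i" using assms(2) by (cases "i = d") auto
qed

lemma inj_upd1: "inj_on (\<lambda>x. x(d:=1)) (cube d)"
proof (rule inj_onI)
  fix x y assume "x \<in> cube d" "y \<in> cube d" "x(d:=1) = y(d:=1)"
  then show "x = y" using cube_last[of x d] cube_last[of y d] upd_eq by metis
qed

lemma cube_disj: "cube d \<inter> (\<lambda>x. x(d:=1)) ` cube d = {}"
  using cube_last by fastforce

lemma finite_cube: "finite (cube d)"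
  by (induction d) (auto simp: cube_0 cube_Suc)

lemma card_cube: "card (cube d) = 2 ^ d"
proof (induction d)
  case 0 then show ?case by (simp add: cube_0)
next
  case (Suc d)
  have "card (cube (Suc d)) = card (cube d) + card ((\<lambda>x. x(d:=1)) ` cube d)"
    unfolding cube_Suc by (rule card_Un_disjoint) (auto simp: finite_cube cube_disj)
  also have "\<dots> = 2 * card (cube d)" using card_image[OF inj_upd1] by simp
  finally show ?case using Suc by simp
qed

lemma sum_cube_Suc: "(\<Sum>x\<in>cube (Suc d). g x) = (\<Sum>x\<in>cube d. g x + g (x(d:=1)))"
proof -
  have "(\<Sum>x\<in>cube (Suc d). g x) = (\<Sum>x\<in>cube d. g x) + (\<Sum>x\<in>(\<lambda>x. x(d:=1)) ` cube d. g x)"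
    unfolding cube_Suc by (rule sum.union_disjoint) (auto simp: finite_cube cube_disj)
  also have "(\<Sum>x\<in>(\<lambda>x. x(d:=1)) ` cube d. g x) = (\<Sum>x\<in>cube d. g (x(d:=1)))"
    by (subst sum.reindex[OF inj_upd1]) simp
  finally show ?thesis by (simp add: sum.distrib)
qed

lemma sumsq_cube:
  fixes a :: "nat \<Rightarrow> real"
  shows "(\<Sum>x\<in>cube d. (\<Sum>i<d. a i * (x i - 1/2))^2) = 2^d * (\<Sum>i<d. (a i)^2) / 4"
proof (induction d)
  case 0 then show ?case by (simp add: cube_0)
next
  case (Suc d)
  have eq1: "(\<Sum>i<d. a i * (x(d:=c)) i - a i * (1/2)) = (\<Sum>i<d. a i * x i - a i * (1/2))" for x and c :: real
    by (rule sum.cong) auto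
  have "(\<Sum>x\<in>cube (Suc d). (\<Sum>i<Suc d. a i * (x i - 1/2))^2)
     = (\<Sum>x\<in>cube d. ((\<Sum>i<d. a i * (x i - 1/2)) - a d / 2)^2 + ((\<Sum>i<d. a i * (x i - 1/2)) + a d / 2)^2)"
    unfolding sum_cube_Suc
    apply (rule sum.cong, simp)
    apply (simp add: cube_last right_diff_distrib eq1)
    done
  also have "\<dots> = (\<Sum>x\<in>cube d. 2 * (\<Sum>i<d. a i * (x i - 1/2))^2 + (a d)^2 / 2)"
    by (rule sum.cong) (auto simp: power2_eq_square algebra_simps)
  also have "\<dots> = 2 * (2^d * (\<Sum>i<d. (a i)^2) / 4) + 2^d * (a d)^2 / 2"
    by (simp add: sum.distrib sum_distrib_left[symmetric] Suc card_cube)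
  finally show ?case by (simp add: algebra_simps)
qed



definition orth :: "nat \<Rightarrow> (nat \<Rightarrow> real) set \<Rightarrow> (nat \<Rightarrow> real) set \<Rightarrow> bool" where
  "orth d A B \<longleftrightarrow> (\<forall>x\<in>A. \<forall>x'\<in>A. \<forall>a\<in>B. \<forall>a'\<in>B. (\<Sum>i<d. (x i - x' i) * (a i - a' i)) = 0)"

lemma orth_sym: assumes "orth d A B" shows "orth d B A"
  unfolding orth_def
proof (intro ballI)
  fix x x' a a' assume "x \<in> B" "x' \<in> B" "a \<in> A" "a' \<in> A"
  then have "(\<Sum>i<d. (a i - a' i) * (x i - x' i)) = 0" using assms unfolding orth_def by blast
  then show "(\<Sum>i<d. (x i - x' i) * (a i - a' i)) = 0" by (simp add: mult.commute)
qed

lemma pi_cube: "x \<in> cube (Suc d) \<Longrightarrow> x(d:=0) \<in> cube d"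
  unfolding cube_def by (auto simp: less_Suc_eq_le)

lemma inj_pi_const: "inj_on (\<lambda>x. x(d:=0)) {a\<in>B. a d = j}"
proof (rule inj_onI)
  fix x y assume "x \<in> {a\<in>B. a d = j}" "y \<in> {a\<in>B. a d = j}" "x(d:=0) = y(d:=0)"
  then show "x = y" using upd_eq[of x d 0 y 0] by auto
qed

lemma sum_pi: fixes d :: nat and x :: "nat \<Rightarrow> real" shows "(\<Sum>i<d. ((x(d:=0)) i - (x'(d:=0)) i) * ((a(d:=0)) i - (a'(d:=0)) i))
   = (\<Sum>i<d. (x i - x' i) * (a i - a' i))"
proof (rule sum.cong[OF refl])
  fix i assume "i \<in> {..<d}"
  then have "i \<noteq> d" by simp
  then show "((x(d:=0)) i - (x'(d:=0)) i) * ((a(d:=0)) i - (a'(d:=0)) i) = (x i - x' i) * (a i - a' i)"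
    by simp
qed

lemma orth_step:
  assumes IH: "\<And>A B. A \<subseteq> cube d \<Longrightarrow> B \<subseteq> cube d \<Longrightarrow> orth d A B \<Longrightarrow> card A * card B \<le> 2^d"
    and A: "A \<subseteq> cube (Suc d)" and B: "B \<subseteq> cube (Suc d)" and o: "orth (Suc d) A B"
    and inj: "inj_on (\<lambda>x. x(d:=0)) A"
  shows "card A * card B \<le> 2 ^ Suc d"
proof -
  define Bj where "Bj j = {a\<in>B. a d = j}" for j :: real
  have fin: "finite B" using B finite_cube finite_subset by blast
  have Bsplit: "B = Bj 0 \<union> Bj 1" using B unfolding Bj_def cube_def by auto
  have cB: "card B = card (Bj 0) + card (Bj 1)"
    unfolding Bsplit by (rule card_Un_disjoint) (use fin in \<open>auto simp: Bj_def\<close>)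
  have key: "card A * card (Bj j) \<le> 2^d" for j
  proof -
    have "orth d ((\<lambda>x. x(d:=0)) ` A) ((\<lambda>x. x(d:=0)) ` Bj j)"
      unfolding orth_def
    proof (intro ballI)
      fix y y' b b' assume "y \<in> (\<lambda>x. x(d:=0)) ` A" "y' \<in> (\<lambda>x. x(d:=0)) ` A"
        "b \<in> (\<lambda>x. x(d:=0)) ` Bj j" "b' \<in> (\<lambda>x. x(d:=0)) ` Bj j"
      then obtain x x' a a' where xs: "x \<in> A" "x' \<in> A" "a \<in> Bj j" "a' \<in> Bj j"
        and eqs: "y = x(d:=0)" "y' = x'(d:=0)" "b = a(d:=0)" "b' = a'(d:=0)" by blast
      have "(\<Sum>i<Suc d. (x i - x' i) * (a i - a' i)) = 0"
        using o xs unfolding orth_def Bj_def by blast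
      moreover have "a d = a' d" using xs unfolding Bj_def by simp
      ultimately have "(\<Sum>i<d. (x i - x' i) * (a i - a' i)) = 0" by simp
      then show "(\<Sum>i<d. (y i - y' i) * (b i - b' i)) = 0"
        unfolding eqs sum_pi .
    qed
    moreover have "(\<lambda>x. x(d:=0)) ` A \<subseteq> cube d" using A pi_cube by blast
    moreover have "(\<lambda>x. x(d:=0)) ` Bj j \<subseteq> cube d" using B pi_cube unfolding Bj_def by blast
    ultimately have "card ((\<lambda>x. x(d:=0)) ` A) * card ((\<lambda>x. x(d:=0)) ` Bj j) \<le> 2^d"
      using IH by blast
    moreover have "card ((\<lambda>x. x(d:=0)) ` A) = card A" using card_image[OF inj] .
    moreover have "card ((\<lambda>x. x(d:=0)) ` Bj j) = card (Bj j)"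
      using card_image[OF inj_pi_const[of d B j]] unfolding Bj_def .
    ultimately show ?thesis by simp
  qed
  have "card A * card B = card A * card (Bj 0) + card A * card (Bj 1)"
    by (simp add: cB algebra_simps)
  also have "\<dots> \<le> 2^d + 2^d" using key[of 0] key[of 1] by linarith
  finally show ?thesis by simp
qed

lemma orth_bound: "A \<subseteq> cube d \<Longrightarrow> B \<subseteq> cube d \<Longrightarrow> orth d A B \<Longrightarrow> card A * card B \<le> 2^d"
proof (induction d arbitrary: A B)
  case 0
  have "card A \<le> card {\<lambda>_::nat. 0::real}" by (rule card_mono) (use 0 in \<open>auto simp: cube_0\<close>)
  moreover have "card B \<le> card {\<lambda>_::nat. 0::real}" by (rule card_mono) (use 0 in \<open>auto simp: cube_0\<close>)
  ultimately have "card A \<le> 1" "card B \<le> 1" by auto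
  then show ?case using mult_le_mono[of "card A" 1 "card B" 1] by simp
next
  case (Suc d)
  show ?case
  proof (cases "inj_on (\<lambda>x. x(d:=0)) A")
    case True
    show ?thesis by (rule orth_step[OF Suc.IH Suc.prems True]) auto
  next
    case False
    then obtain x x' where xx: "x \<in> A" "x' \<in> A" "x \<noteq> x'" "x(d:=0) = x'(d:=0)"
      unfolding inj_on_def by blast
    have xd: "x d \<noteq> x' d"
    proof
      assume "x d = x' d"
      then have "x = x'" using xx(4) upd_eq by metis
      then show False using xx(3) by simp
    qed
    have injB: "inj_on (\<lambda>x. x(d:=0)) B"
    proof (rule inj_onI, rule ccontr)
      fix b b' assume bb: "b \<in> B" "b' \<in> B" "b(d:=0) = b'(d:=0)" "b \<noteq> b'"
      have bd: "b d \<noteq> b' d"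
      proof
        assume "b d = b' d"
        then have "b = b'" using bb(3) upd_eq by metis
        then show False using bb(4) by simp
      qed
      have s0: "(\<Sum>i<Suc d. (x i - x' i) * (b i - b' i)) = 0"
        using Suc.prems(3) xx bb unfolding orth_def by blast
      have "(\<Sum>i<d. (x i - x' i) * (b i - b' i)) = 0"
      proof (rule sum.neutral, intro ballI)
        fix i assume "i \<in> {..<d}"
        then have "x i = x' i" using fun_cong[OF xx(4), of i] by auto
        then show "(x i - x' i) * (b i - b' i) = 0" by simp
      qed
      then have "(x d - x' d) * (b d - b' d) = 0" using s0 by simp
      then show False using xd bd by simp
    qed
    have "card B * card A \<le> 2 ^ Suc d"
      by (rule orth_step[OF Suc.IH]) (use Suc.prems orth_sym injB in auto)
    then show ?thesis by (simp add: mult.commute)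
  qed
qed



definition hp :: "nat \<Rightarrow> (nat \<Rightarrow> real) \<Rightarrow> int \<Rightarrow> (nat \<Rightarrow> real) set" where
  "hp d a s = {x \<in> Rspace d. (\<Sum>i<d. a i * x i) = (\<Sum>i<d. a i)/2 + of_int s / 2}"

definition Ncube :: "nat \<Rightarrow> (nat \<Rightarrow> real) set" where
  "Ncube d = cube d - {\<lambda>_. 0}"

lemma sum_if1: fixes d i0 :: nat assumes "i0 < d"
  shows "(\<Sum>i<d. f i * (if i = i0 then c else 0)) = f i0 * (c::real)"
proof -
  have "(\<Sum>i<d. f i * (if i = i0 then c else 0)) = (\<Sum>i<d. (if i = i0 then f i0 * c else 0))"
    by (rule sum.cong) auto
  also have "\<dots> = f i0 * c" using assms by (simp add: sum.delta)
  finally show ?thesis .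
qed

lemma sum_if2: fixes d i0 j :: nat assumes "i0 < d" "j < d" "j \<noteq> i0"
  shows "(\<Sum>i<d. f i * (if i = i0 then c else if i = j then e else 0)) = f i0 * c + f j * (e::real)"
proof -
  have "(\<Sum>i<d. f i * (if i = i0 then c else if i = j then e else 0))
      = (\<Sum>i<d. (if i = i0 then f i0 * c else 0) + (if i = j then f j * e else 0))"
    by (rule sum.cong) (use assms in auto)
  also have "\<dots> = f i0 * c + f j * e" using assms by (simp add: sum.distrib sum.delta)
  finally show ?thesis .
qed

lemma Ncube_nz: assumes "a \<in> Ncube d" shows "\<exists>i<d. a i = 1"
proof (rule ccontr)
  assume "\<not> ?thesis"
  then have "a = (\<lambda>_. 0)" using assms unfolding Ncube_def cube_def
    by (metis (mono_tags, lifting) DiffD1 linorder_not_less mem_Collect_eq)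
  then show False using assms unfolding Ncube_def by simp
qed

lemma hp_inj:
  assumes a: "a \<in> Ncube d" and a': "a' \<in> Ncube d" and eq: "hp d a s = hp d a' s'"
  shows "a = a' \<and> s = s'"
proof -
  obtain i0 where i0: "i0 < d" "a i0 = 1" using Ncube_nz[OF a] by blast
  define b where "b = (\<Sum>i<d. a i)/2 + of_int s / 2"
  define b' where "b' = (\<Sum>i<d. a' i)/2 + of_int s' / 2"
  have mem: "x \<in> hp d a' s'" if "x \<in> Rspace d" "(\<Sum>i<d. a i * x i) = b" for x
    using that eq unfolding hp_def b_def by auto
  have memD: "(\<Sum>i<d. a' i * x i) = b'" if "x \<in> hp d a' s'" for x
    using that unfolding hp_def b'_def by auto
  define p0 where "p0 = (\<lambda>i. if i = i0 then b else (0::real))"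
  have p0R: "p0 \<in> Rspace d" using i0 unfolding p0_def Rspace_def by auto
  have "(\<Sum>i<d. a i * p0 i) = b" unfolding p0_def using sum_if1[OF i0(1)] i0 by simp
  then have "(\<Sum>i<d. a' i * p0 i) = b'" using memD mem p0R by blast
  then have h0: "a' i0 * b = b'" unfolding p0_def using sum_if1[OF i0(1)] by simp
  have lin: "a' j = a' i0 * a j" if j: "j < d" for j
  proof (cases "j = i0")
    case True then show ?thesis using i0 by simp
  next
    case False
    define pj where "pj = (\<lambda>i. if i = i0 then b - a j else if i = j then 1 else (0::real))"
    have pjR: "pj \<in> Rspace d" using i0 j unfolding pj_def Rspace_def by auto
    have "(\<Sum>i<d. a i * pj i) = b" unfolding pj_def using sum_if2[OF i0(1) j False] i0 by simp
    then have "(\<Sum>i<d. a' i * pj i) = b'" using memD mem pjR by blast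
    then have "a' i0 * (b - a j) + a' j = b'" unfolding pj_def using sum_if2[OF i0(1) j False] by simp
    then show ?thesis using h0 by (simp add: algebra_simps)
  qed
  have a'cube: "a' \<in> cube d" and acube: "a \<in> cube d" using a a' unfolding Ncube_def by auto
  have l1: "a' i0 = 1"
  proof (rule ccontr)
    assume "a' i0 \<noteq> 1"
    then have "a' i0 = 0" using a'cube i0 unfolding cube_def by auto
    then have "a' = (\<lambda>_. 0)" using lin a'cube unfolding cube_def
      by (metis (mono_tags, lifting) linorder_not_less mem_Collect_eq mult_zero_left)
    then show False using a' unfolding Ncube_def by simp
  qed
  have aa: "a = a'"
  proof
    fix j show "a j = a' j"
    proof (cases "j < d")
      case True then show ?thesis using lin l1 by simp
    next
      case False then show ?thesis using acube a'cube unfolding cube_def by auto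
    qed
  qed
  have "b = b'" using h0 l1 by simp
  then have "s = s'" unfolding b_def b'_def aa by simp
  then show ?thesis using aa by simp
qed

lemma hp_hyperplane: "a \<in> Ncube d \<Longrightarrow> hyperplane d (hp d a s)"
  unfolding hyperplane_def hp_def using Ncube_nz[of a d] by force

lemma card_Ncube: "card (Ncube d) = 2^d - 1"
proof -
  have "(\<lambda>_. 0) \<in> cube d" unfolding cube_def by simp
  then show ?thesis unfolding Ncube_def by (simp add: card_cube finite_cube)
qed

lemma Rspace_affine: "affine_subspace d (Rspace d)"
  unfolding affine_subspace_def Rspace_def by auto



definition FF :: "nat \<Rightarrow> (nat \<Rightarrow> real) \<Rightarrow> (nat \<Rightarrow> real) \<Rightarrow> real" where
  "FF d a x = (\<Sum>i<d. a i * (x i - 1/2))"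

lemma FF_eq: "FF d a x = (\<Sum>i<d. a i * x i) - (\<Sum>i<d. a i) / 2"
  unfolding FF_def by (simp add: right_diff_distrib sum_subtractf sum_divide_distrib)

lemma FF_int: assumes "a \<in> cube d" "x \<in> cube d" shows "2 * FF d a x \<in> \<int>"
proof -
  have "2 * FF d a x = (\<Sum>i<d. 2 * a i * x i - a i)"
    unfolding FF_def by (simp add: sum_distrib_left algebra_simps)
  also have "\<dots> \<in> \<int>"
  proof (rule Ints_sum)
    fix i assume "i \<in> {..<d}"
    then have "a i = 0 \<or> a i = 1" "x i = 0 \<or> x i = 1" using assms unfolding cube_def by auto
    then show "2 * a i * x i - a i \<in> \<int>" by auto
  qed
  finally show ?thesis .
qed

lemma good_card:
  fixes r :: nat
  assumes a: "a \<in> cube d" and r: "real d \<le> (real r)^2" and r0: "r > 0"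
  shows "real (card {x \<in> cube d. \<bar>FF d a x\<bar> \<le> r}) \<ge> 3/4 * 2^d"
proof -
  define Bad where "Bad = {x \<in> cube d. \<bar>FF d a x\<bar> > r}"
  define G where "G = {x \<in> cube d. \<bar>FF d a x\<bar> \<le> r}"
  have fB: "finite Bad" "finite G" unfolding Bad_def G_def using finite_cube by auto
  have split: "cube d = G \<union> Bad" "G \<inter> Bad = {}" unfolding Bad_def G_def by auto
  have "card (cube d) = card G + card Bad"
    using card_Un_disjoint[OF fB(2) fB(1) split(2)] split(1) by simp
  then have cardsum: "card G + card Bad = 2^d" using card_cube[of d] by simp
  have "(\<Sum>x\<in>Bad. (real r)^2) \<le> (\<Sum>x\<in>Bad. (FF d a x)^2)"
  proof (rule sum_mono)
    fix x assume "x \<in> Bad"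
    then have "real r < \<bar>FF d a x\<bar>" unfolding Bad_def by auto
    then have "(real r)^2 \<le> \<bar>FF d a x\<bar>^2" by (intro power_mono) auto
    then show "(real r)^2 \<le> (FF d a x)^2" by simp
  qed
  also have "\<dots> \<le> (\<Sum>x\<in>cube d. (FF d a x)^2)"
    by (rule sum_mono2) (auto simp: finite_cube Bad_def)
  also have "\<dots> = 2^d * (\<Sum>i<d. (a i)^2) / 4" unfolding FF_def by (rule sumsq_cube)
  also have "\<dots> \<le> 2^d * real d / 4"
  proof -
    have "(\<Sum>i<d. (a i)^2) \<le> (\<Sum>i<d. 1)"
    proof (rule sum_mono)
      fix i assume "i \<in> {..<d}"
      then have "a i = 0 \<or> a i = 1" using a unfolding cube_def by auto
      then show "(a i)^2 \<le> 1" by auto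
    qed
    then show ?thesis by simp
  qed
  also have "\<dots> \<le> 2^d * (real r)^2 / 4" using r by simp
  finally have "real (card Bad) * (real r)^2 \<le> 2^d * (real r)^2 / 4" by simp
  then have "real (card Bad) \<le> 2^d / 4" using r0 by (simp add: field_simps)
  moreover have "real (card G) + real (card Bad) = 2^d" using cardsum by (metis of_nat_add of_nat_numeral of_nat_power)
  ultimately show ?thesis unfolding G_def by linarith
qed



lemma int_floor_eq: assumes "(z::real) \<in> \<int>" shows "of_int \<lfloor>z\<rfloor> = z"
  using assms by (metis Ints_cases floor_of_int)

lemma rs_elem:
  assumes S: "affine_subspace d S"
    and Hdef: "H = (\<lambda>(a,s). hp d a s) ` (Ncube d \<times> T)" and fT: "finite T"
  shows "card {p \<in> cube d. p \<in> S} * card {h \<in> H. S \<subseteq> h} \<le> 2^d"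
proof -
  define A where "A = {p \<in> cube d. p \<in> S}"
  define J where "J = {(a,s) \<in> Ncube d \<times> T. S \<subseteq> hp d a s}"
  define Bn where "Bn = fst ` J"
  obtain x0 where x0: "x0 \<in> S" using S unfolding affine_subspace_def by blast
  have fN: "finite (Ncube d)" unfolding Ncube_def using finite_cube by simp
  have "J \<subseteq> Ncube d \<times> T" unfolding J_def by auto
  then have fJ: "finite J" using finite_subset fN fT by blast
  have sub: "{h \<in> H. S \<subseteq> h} \<subseteq> (\<lambda>(a,s). hp d a s) ` J" unfolding Hdef J_def by auto
  have c1: "card {h \<in> H. S \<subseteq> h} \<le> card J"
    using card_mono[OF finite_imageI[OF fJ] sub] card_image_le[OF fJ, of "\<lambda>(a,s). hp d a s"] by linarith
  have injf: "inj_on fst J"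
  proof (rule inj_onI)
    fix u v assume u: "u \<in> J" and v: "v \<in> J" and e: "fst u = fst v"
    obtain a s where us: "u = (a,s)" by (cases u)
    obtain a' s' where vs: "v = (a',s')" by (cases v)
    have "x0 \<in> hp d a s" "x0 \<in> hp d a' s'" using u v x0 us vs unfolding J_def by auto
    then have "(\<Sum>i<d. a i)/2 + of_int s / 2 = (\<Sum>i<d. a' i)/2 + of_int s' / 2"
      unfolding hp_def using e us vs by simp
    then have "s = s'" using e us vs by simp
    then show "u = v" using e us vs by simp
  qed
  have cJ: "card J = card Bn" unfolding Bn_def using card_image[OF injf] by simp
  have Bsub: "Bn \<subseteq> cube d" unfolding Bn_def J_def Ncube_def by auto
  have Asub: "A \<subseteq> cube d" unfolding A_def by auto
  have o: "orth d A Bn" unfolding orth_def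
  proof (intro ballI)
    fix x x' a a' assume xs: "x \<in> A" "x' \<in> A" "a \<in> Bn" "a' \<in> Bn"
    have lv: "(\<Sum>i<d. b i * x i) = (\<Sum>i<d. b i * x' i)" if bB: "b \<in> Bn" for b
    proof -
      obtain u where u: "u \<in> J" "b = fst u" using bB unfolding Bn_def by blast
      obtain s where "(b,s) \<in> J" using u by (cases u) auto
      then have "S \<subseteq> hp d b s" unfolding J_def by auto
      moreover have "x \<in> S" "x' \<in> S" using xs unfolding A_def by auto
      ultimately have "x \<in> hp d b s" "x' \<in> hp d b s" by auto
    then show ?thesis unfolding hp_def by simp
    qed
    note lv
    have "(\<Sum>i<d. (x i - x' i) * (a i - a' i))
        = (\<Sum>i<d. a i * x i) - (\<Sum>i<d. a i * x' i) - ((\<Sum>i<d. a' i * x i) - (\<Sum>i<d. a' i * x' i))"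
      by (simp add: sum_subtractf[symmetric] algebra_simps)
    then show "(\<Sum>i<d. (x i - x' i) * (a i - a' i)) = 0" using lv[OF xs(3)] lv[OF xs(4)] by simp
  qed
  have "card A * card Bn \<le> 2^d" by (rule orth_bound[OF Asub Bsub o])
  moreover have "card {h \<in> H. S \<subseteq> h} \<le> card Bn" using c1 cJ by simp
  then have "card A * card {h \<in> H. S \<subseteq> h} \<le> card A * card Bn" by (rule mult_le_mono2)
  ultimately show ?thesis unfolding A_def by linarith
qed



lemma incid_bound:
  fixes r :: nat
  assumes Hdef: "H = (\<lambda>(a,s). hp d a s) ` (Ncube d \<times> T)" and fT: "finite T"
    and Tdef: "T = {-(2*int r)..2*int r}"
    and r: "real d \<le> (real r)^2" and r0: "r > 0"
  shows "real (incidences (cube d) H) \<ge> real (card (Ncube d)) * (3/4 * 2^d)"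
proof -
  define G where "G a = {x \<in> cube d. \<bar>FF d a x\<bar> \<le> r}" for a
  define Inc where "Inc = {(p, h). p \<in> cube d \<and> h \<in> H \<and> p \<in> h}"
  define \<Phi> where "\<Phi> = (\<lambda>(a,x). (x, hp d a \<lfloor>2 * FF d a x\<rfloor>))"
  have fN: "finite (Ncube d)" unfolding Ncube_def using finite_cube by simp
  have fH: "finite H" unfolding Hdef using fN fT by simp
  have fInc: "finite Inc"
    by (rule finite_subset[of _ "cube d \<times> H"]) (auto simp: Inc_def finite_cube fH)
  have fG: "finite (G a)" for a unfolding G_def using finite_cube by simp
  have img: "\<Phi> ` Sigma (Ncube d) G \<subseteq> Inc"
  proof
    fix y assume "y \<in> \<Phi> ` Sigma (Ncube d) G"
    then obtain a x where ax: "a \<in> Ncube d" "x \<in> G a" and y: "y = (x, hp d a \<lfloor>2 * FF d a x\<rfloor>)"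
      unfolding \<Phi>_def by auto
    have ac: "a \<in> cube d" and xc: "x \<in> cube d" using ax unfolding Ncube_def G_def by auto
    define k where "k = \<lfloor>2 * FF d a x\<rfloor>"
    have kk: "of_int k = 2 * FF d a x" unfolding k_def by (rule int_floor_eq[OF FF_int[OF ac xc]])
    have "\<bar>FF d a x\<bar> \<le> r" using ax unfolding G_def by auto
    then have "\<bar>real_of_int k\<bar> \<le> 2 * real r" using kk by simp
    then have "\<bar>k\<bar> \<le> 2 * int r" by linarith
    then have kT: "k \<in> T" unfolding Tdef by auto
    have xR: "x \<in> Rspace d" using xc unfolding cube_def Rspace_def by auto
    have "x \<in> hp d a k" unfolding hp_def using xR kk FF_eq[of d a x] by (simp add: field_simps)
    moreover have "hp d a k \<in> H" unfolding Hdef using ax(1) kT by force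
    ultimately show "y \<in> Inc" unfolding Inc_def y k_def[symmetric] using xc by simp
  qed
  have inj: "inj_on \<Phi> (Sigma (Ncube d) G)"
  proof (rule inj_onI)
    fix u v assume u: "u \<in> Sigma (Ncube d) G" and v: "v \<in> Sigma (Ncube d) G" and e: "\<Phi> u = \<Phi> v"
    obtain a x where us: "u = (a,x)" by (cases u)
    obtain a' x' where vs: "v = (a',x')" by (cases v)
    have "x = x'" "hp d a \<lfloor>2 * FF d a x\<rfloor> = hp d a' \<lfloor>2 * FF d a' x'\<rfloor>"
      using e unfolding us vs \<Phi>_def by auto
    moreover have "a \<in> Ncube d" "a' \<in> Ncube d" using u v us vs by auto
    ultimately show "u = v" using hp_inj us vs by blast
  qed
  have "card (Sigma (Ncube d) G) \<le> card Inc"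
    using card_inj_on_le[OF inj img fInc] .
  moreover have "card (Sigma (Ncube d) G) = (\<Sum>a\<in>Ncube d. card (G a))"
    by (rule card_SigmaI[OF fN]) (use fG in auto)
  ultimately have "(\<Sum>a\<in>Ncube d. card (G a)) \<le> card Inc" by simp
  then have "real (\<Sum>a\<in>Ncube d. card (G a)) \<le> real (card Inc)" by (rule of_nat_mono)
  then have "(\<Sum>a\<in>Ncube d. real (card (G a))) \<le> real (card Inc)" by (simp add: of_nat_sum)
  moreover have "(\<Sum>a\<in>Ncube d. (3/4 * 2^d::real)) \<le> (\<Sum>a\<in>Ncube d. real (card (G a)))"
  proof (rule sum_mono)
    fix a assume "a \<in> Ncube d"
    then have "a \<in> cube d" unfolding Ncube_def by auto
    then show "3/4 * 2^d \<le> real (card (G a))" unfolding G_def using good_card r r0 by blast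
  qed
  ultimately show ?thesis unfolding incidences_def Inc_def by simp
qed

theorem theorem1p6:
  shows "\<exists>c C :: real. c > 0 \<and> C > 0 \<and>
    (\<forall>d::nat. d \<ge> 2 \<longrightarrow>
      (\<exists>P H. finite P \<and> finite H \<and> P \<noteq> {} \<and> H \<noteq> {} \<and>
         P \<subseteq> Rspace d \<and> (\<forall>h\<in>H. hyperplane d h) \<and>
         real (incidences P H) \<ge> c * real (card P) * real (card H) / sqrt (real d) \<and>
         real (rs d P H) \<le> C * real (card H) * real (card P) * (1/2) ^ d / sqrt (real d)))"
proof -
  have main: "\<forall>d::nat. d \<ge> 2 \<longrightarrow>
      (\<exists>P H. finite P \<and> finite H \<and> P \<noteq> {} \<and> H \<noteq> {} \<and>
         P \<subseteq> Rspace d \<and> (\<forall>h\<in>H. hyperplane d h) \<and>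
         real (incidences P H) \<ge> 3/32 * real (card P) * real (card H) / sqrt (real d) \<and>
         real (rs d P H) \<le> 1 * real (card H) * real (card P) * (1/2) ^ d / sqrt (real d))"
  proof (intro allI impI)
  fix d :: nat assume d2: "2 \<le> d"
  define r where "r = nat \<lceil>sqrt (real d)\<rceil>"
  define T where "T = {-(2*int r)..2*int r}"
  define H where "H = (\<lambda>(a,s). hp d a s) ` (Ncube d \<times> T)"
  have sq0: "sqrt (real d) > 0" using d2 by simp
  have rge: "sqrt (real d) \<le> real r" unfolding r_def using sq0 by linarith
  have rle: "real r \<le> sqrt (real d) + 1" unfolding r_def using sq0 by linarith
  have sq54: "5/4 \<le> sqrt (real d)"
  proof -
    have "sqrt (25/16) \<le> sqrt (real d)" using d2 by (subst real_sqrt_le_iff) simp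
    moreover have "sqrt (25/16::real) = 5/4" by (simp add: real_sqrt_divide)
    ultimately show ?thesis by simp
  qed
  have r0: "r > 0" using rge sq54 by linarith
  have rsq: "real d \<le> (real r)^2"
  proof -
    have "(sqrt (real d))^2 \<le> (real r)^2" using rge sq0 by (intro power_mono) auto
    then show ?thesis by simp
  qed
  have fT: "finite T" unfolding T_def by simp
  have cT: "card T = 4 * r + 1" unfolding T_def by (simp add: nat_int_add)
  have fN: "finite (Ncube d)" unfolding Ncube_def using finite_cube by simp
  have cN: "card (Ncube d) = 2^d - 1" by (rule card_Ncube)
  have pow2: "(2::nat)^d \<ge> 4"
  proof -
    have "(2::nat)^2 \<le> 2^d" using d2 by (intro power_increasing) auto
    then show ?thesis by simp
  qed
  have injH: "inj_on (\<lambda>(a,s). hp d a s) (Ncube d \<times> T)"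
    by (rule inj_onI) (use hp_inj in auto)
  have cH: "card H = card (Ncube d) * card T"
    unfolding H_def using card_image[OF injH] by (simp add: card_cartesian_product)
  define N0 where "N0 = real (card (Ncube d))"
  have N0ge: "N0 \<ge> 2^d / 2"
  proof -
    have "real (2^d - 1 :: nat) = 2^d - 1" using pow2 by (simp add: of_nat_diff)
    moreover have "(2::real)^d \<ge> 4" using of_nat_le_iff[of 4 "(2::nat)^d", THEN iffD2, OF pow2] by simp
    ultimately show ?thesis unfolding N0_def cN by linarith
  qed
  have N0pos: "N0 \<ge> 0" unfolding N0_def by simp
  have cHr: "real (card H) = N0 * (4 * real r + 1)" unfolding cH cT N0_def by (simp add: algebra_simps)
  have cP: "real (card (cube d)) = 2^d" by (simp add: card_cube)
  show "\<exists>P H. finite P \<and> finite H \<and> P \<noteq> {} \<and> H \<noteq> {} \<and>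
         P \<subseteq> Rspace d \<and> (\<forall>h\<in>H. hyperplane d h) \<and>
         real (incidences P H) \<ge> 3/32 * real (card P) * real (card H) / sqrt (real d) \<and>
         real (rs d P H) \<le> 1 * real (card H) * real (card P) * (1/2) ^ d / sqrt (real d)"
  proof (intro exI conjI)
    show "finite (cube d)" by (rule finite_cube)
    show "finite H" unfolding H_def using fN fT by simp
    show "cube d \<noteq> {}" using card_cube[of d] by auto
    show "H \<noteq> {}"
    proof
      assume "H = {}"
      then have "card H = 0" by simp
      then show False using cH cT cN pow2 by simp
    qed
    show "cube d \<subseteq> Rspace d" unfolding cube_def Rspace_def by auto
    show "\<forall>h\<in>H. hyperplane d h" unfolding H_def using hp_hyperplane by auto
    have I: "real (incidences (cube d) H) \<ge> N0 * (3/4 * 2^d)"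
      unfolding N0_def by (rule incid_bound[OF H_def fT T_def rsq r0])
    have "4 * real r + 1 \<le> 8 * sqrt (real d)" using rle sq54 by linarith
    then have "3/32 * 2^d * (N0 * (4 * real r + 1)) / sqrt (real d)
        \<le> 3/32 * 2^d * (N0 * (8 * sqrt (real d))) / sqrt (real d)"
      using N0pos by (intro divide_right_mono mult_left_mono) auto
    also have "\<dots> = N0 * (3/4 * 2^d)" using sq0 by (simp add: field_simps)
    finally have chain: "3/32 * 2^d * (N0 * (4 * real r + 1)) / sqrt (real d) \<le> N0 * (3/4 * 2^d)" .
    have eqL: "3/32 * real (card (cube d)) * real (card H) / sqrt (real d) = 3/32 * 2^d * (N0 * (4 * real r + 1)) / sqrt (real d)"
      unfolding cP cHr by simp
    show "real (incidences (cube d) H) \<ge> 3/32 * real (card (cube d)) * real (card H) / sqrt (real d)"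
      using I chain eqL by linarith
    define X where "X = {card {p \<in> cube d. p \<in> S} * card {h \<in> H. S \<subseteq> h} | S. affine_subspace d S}"
    have Xb: "\<And>y. y \<in> X \<Longrightarrow> y \<le> 2^d" unfolding X_def using rs_elem[OF _ H_def fT] by blast
    have Xne: "X \<noteq> {}" unfolding X_def using Rspace_affine by blast
    have Xf: "finite X" using Xb by (meson finite_atMost finite_subset atMost_iff subsetI)
    have rsb: "rs d (cube d) H \<le> 2^d" unfolding rs_def X_def[symmetric] by (rule Max.boundedI[OF Xf Xne Xb])
    have "(2::real)^d * (1/2)^d = 1" by (simp add: power_mult_distrib[symmetric])
    then have "1 * real (card H) * real (card (cube d)) * (1/2) ^ d / sqrt (real d)
        = N0 * (4 * real r + 1) / sqrt (real d)" unfolding cHr cP by simp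
    also have "\<dots> \<ge> N0 * (4 * sqrt (real d)) / sqrt (real d)"
      using rge N0pos by (intro divide_right_mono mult_left_mono) auto
    finally have "1 * real (card H) * real (card (cube d)) * (1/2) ^ d / sqrt (real d) \<ge> 4 * N0"
      using sq0 by simp
    moreover have "real (rs d (cube d) H) \<le> 2^d" using of_nat_mono[OF rsb, where 'a=real] by simp
    ultimately show "real (rs d (cube d) H) \<le> 1 * real (card H) * real (card (cube d)) * (1/2) ^ d / sqrt (real d)"
      using N0ge by linarith
  qed
qed
  show ?thesis by (intro exI[of _ "3/32"] exI[of _ 1] conjI) (simp, simp, rule main)
qed


end
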